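(* Let $G$ be a graph and $(x,y)\in E(G)$. Let $\Delta_G(x,y)=N_G(x)\cap N_G(y)$, $R_G(x)=(N_G(x)\setminus\{y\})\setminus\Delta_G(x,y)$ and $R_G(y)=(N_G(y)\setminus\{x\})\setminus\Delta_G(x,y)$. Suppose that for some $k\le\min\{|R_G(x)|,|R_G(y)|\}$ there exist distinct $a_1,\dots,a_k\in R_G(x)$ and distinct $b_1,\dots,b_k\in R_G(y)$ with $d_G(a_i,b_i)\le 2$ for all $i$ (a 2-matching of size $k$). Then $$\kappa(x,y)\ge -2+\frac{3|\Delta_G(x,y)|+k+2}{\max\{d_x,d_y\}}.$$ Moreover, if $k=\min\{|R_G(x)|,|R_G(y)|\}$, then $$\kappa(x,y)\ge -2+\frac{2|\Delta_G(x,y)|+\min\{d_x,d_y\}+1}{\max\{d_x,d_y\}}.$$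
   Context: Graphs are locally finite and unweighted. $d_G$ is the shortest-path metric, $N_G(v)$ the neighbour set and $d_v$ the degree of $v$; $m_v$ is the uniform probability measure on $N_G(v)$, and for an edge $(x,y)$, $\kappa(x,y)=1-W_1(m_x,m_y)$, where $W_1$ is the Wasserstein-1 (transportation) distance with respect to $d_G$. *)

theory Defs
  imports Main "HOL-Library.Extended_Real" Complex_Main
begin

definition graph :: "('a \<Rightarrow> 'a \<Rightarrow> bool) \<Rightarrow> bool" where
  "graph E \<longleftrightarrow> (\<forall>u v. E u v \<longrightarrow> E v u) \<and> (\<forall>u. \<not> E u u) \<and> (\<forall>u. finite {v. E u v})"

definition nbrs :: "('a \<Rightarrow> 'a \<Rightarrow> bool) \<Rightarrow> 'a \<Rightarrow> 'a set" where
  "nbrs E v = {u. E v u}"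

definition deg :: "('a \<Rightarrow> 'a \<Rightarrow> bool) \<Rightarrow> 'a \<Rightarrow> nat" where
  "deg E v = card (nbrs E v)"

text \<open>Shortest-path distance (number of edges of a shortest walk).  Only used
between vertices that are connected.\<close>
definition gdist :: "('a \<Rightarrow> 'a \<Rightarrow> bool) \<Rightarrow> 'a \<Rightarrow> 'a \<Rightarrow> real" where
  "gdist E u v = real (LEAST n. (E ^^ n) u v)"

definition couplings :: "('a \<Rightarrow> 'a \<Rightarrow> bool) \<Rightarrow> 'a \<Rightarrow> 'a \<Rightarrow> ('a \<Rightarrow> 'a \<Rightarrow> real) set" where
  "couplings E x y = {\<pi>. (\<forall>u v. 0 \<le> \<pi> u v)
      \<and> (\<forall>u v. \<pi> u v \<noteq> 0 \<longrightarrow> u \<in> nbrs E x \<and> v \<in> nbrs E y)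
      \<and> (\<forall>u\<in>nbrs E x. (\<Sum>v\<in>nbrs E y. \<pi> u v) = 1 / real (deg E x))
      \<and> (\<forall>v\<in>nbrs E y. (\<Sum>u\<in>nbrs E x. \<pi> u v) = 1 / real (deg E y))}"

definition W1 :: "('a \<Rightarrow> 'a \<Rightarrow> bool) \<Rightarrow> 'a \<Rightarrow> 'a \<Rightarrow> real" where
  "W1 E x y = Inf {(\<Sum>(u,v)\<in>nbrs E x \<times> nbrs E y. \<pi> u v * gdist E u v) | \<pi>. \<pi> \<in> couplings E x y}"

definition ollivier :: "('a \<Rightarrow> 'a \<Rightarrow> bool) \<Rightarrow> 'a \<Rightarrow> 'a \<Rightarrow> real" where
  "ollivier E x y = 1 - W1 E x y"

end

theory Submission
  imports Defs
begin
lemma gdist_le: "(E ^^ n) u v \<Longrightarrow> gdist E u v \<le> real n"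
  unfolding gdist_def by (simp add: Least_le)

lemma gdist_nonneg: "0 \<le> gdist E u v"
  unfolding gdist_def by simp

lemma gdist_refl: "gdist E u u = 0"
  using gdist_le[where E=E and n=0 and u=u and v=u] gdist_nonneg[where E=E and u=u and v=u] by simp

lemma gdist_edge: "E u v \<Longrightarrow> gdist E u v \<le> 1"
  using gdist_le[where E=E and n=1 and u=u and v=v] by (simp add: relcompp.intros)

lemma gdist_3: "E u x \<Longrightarrow> E x y \<Longrightarrow> E y v \<Longrightarrow> gdist E u v \<le> 3"
proof -
  assume h: "E u x" "E x y" "E y v"
  have "(E ^^ 3) u v" using h by (auto simp: numeral_eq_Suc relcompp.intros)
  thus ?thesis using gdist_le[where E=E and n=3 and u=u and v=v] by simp
qed
lemma W1_le:
  assumes G: "graph E" and xy: "E x y"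
  and A: "A \<subseteq> nbrs E x" and pA: "p ` A \<subseteq> nbrs E y" and pinj: "inj_on p A"
  and g3: "\<forall>u\<in>nbrs E x. \<forall>v\<in>nbrs E y. gdist E u v \<le> 3"
  shows "W1 E x y \<le> (\<Sum>u\<in>A. gdist E u (p u)) / real (max (deg E x) (deg E y))
            + 3 * (1 - real (card A) / real (max (deg E x) (deg E y)))"
proof -
  define Nx where "Nx = nbrs E x"
  define Ny where "Ny = nbrs E y"
  define D where "D = real (max (deg E x) (deg E y))"
  define dx where "dx = real (deg E x)"
  define dy where "dy = real (deg E y)"
  define g where "g = gdist E"
  have fNx: "finite Nx" using G unfolding Nx_def nbrs_def graph_def by auto
  have fNy: "finite Ny" using G unfolding Ny_def nbrs_def graph_def by auto
  have yNx: "y \<in> Nx" using xy unfolding Nx_def nbrs_def by auto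
  have xNy: "x \<in> Ny" using xy G unfolding Ny_def nbrs_def graph_def by auto
  have dxpos: "dx > 0" using fNx yNx unfolding dx_def deg_def Nx_def
    by (simp add: card_gt_0_iff) blast
  have dypos: "dy > 0" using fNy xNy unfolding dy_def deg_def Ny_def
    by (simp add: card_gt_0_iff) blast
  have dxD: "dx \<le> D" and dyD: "dy \<le> D" unfolding dx_def dy_def D_def by auto
  have Dpos: "D > 0" using dxpos dxD by linarith
  have cNx: "real (card Nx) = dx" unfolding dx_def deg_def Nx_def by simp
  have cNy: "real (card Ny) = dy" unfolding dy_def deg_def Ny_def by simp
  have AN: "A \<subseteq> Nx" using A Nx_def by simp
  have fA: "finite A" using AN fNx finite_subset by blast
  define B where "B = p ` A"
  have BN: "B \<subseteq> Ny" using pA B_def Ny_def by simp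
  have cB: "card B = card A" unfolding B_def using pinj card_image by blast
  define r where "r u = 1/dx - (if u\<in>A then 1/D else 0)" for u
  define s where "s v = 1/dy - (if v\<in>B then 1/D else 0)" for v
  define S where "S = 1 - real (card A) / D"
  have r0: "r u \<ge> 0" for u
    using dxD dxpos Dpos unfolding r_def by (simp add: frac_le)
  have s0: "s v \<ge> 0" for v
    using dyD dypos Dpos unfolding s_def by (simp add: frac_le)
  have sr: "sum r Nx = S"
  proof -
    have "sum r Nx = (\<Sum>u\<in>Nx. 1/dx) - (\<Sum>u\<in>Nx. if u\<in>A then 1/D else 0)"
      unfolding r_def by (simp add: sum_subtractf)
    also have "(\<Sum>u\<in>Nx. if u\<in>A then 1/D else 0) = (\<Sum>u\<in>Nx \<inter> A. 1/D)"
      by (rule sum.inter_restrict[OF fNx, symmetric])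
    also have "Nx \<inter> A = A" using AN by blast
    finally show ?thesis using cNx dxpos unfolding S_def by simp
  qed
  have ss: "sum s Ny = S"
  proof -
    have "sum s Ny = (\<Sum>u\<in>Ny. 1/dy) - (\<Sum>u\<in>Ny. if u\<in>B then 1/D else 0)"
      unfolding s_def by (simp add: sum_subtractf)
    also have "(\<Sum>u\<in>Ny. if u\<in>B then 1/D else 0) = (\<Sum>u\<in>Ny \<inter> B. 1/D)"
      by (rule sum.inter_restrict[OF fNy, symmetric])
    also have "Ny \<inter> B = B" using BN by blast
    finally show ?thesis using cNy dypos cB unfolding S_def by simp
  qed
  have S0: "S \<ge> 0" using sr r0 sum_nonneg by metis
  have rS: "r u * S / S = r u" if "u \<in> Nx" for u
  proof (cases "S = 0")
    case True
    then have "\<forall>u\<in>Nx. r u = 0" using sum_nonneg_eq_0_iff[OF fNx] r0 sr by metis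
    then show ?thesis using that by simp
  qed simp
  have sS: "s v * S / S = s v" if "v \<in> Ny" for v
  proof (cases "S = 0")
    case True
    then have "\<forall>u\<in>Ny. s u = 0" using sum_nonneg_eq_0_iff[OF fNy] s0 ss by metis
    then show ?thesis using that by simp
  qed simp
  define \<pi>0 where "\<pi>0 u v = (if u\<in>A \<and> v = p u then 1/D else 0)" for u v
  define \<pi> where "\<pi> u v = (if u\<in>Nx \<and> v\<in>Ny then \<pi>0 u v + r u * s v / S else 0)" for u v
  have row0: "(\<Sum>v\<in>Ny. \<pi>0 u v) = (if u\<in>A then 1/D else 0)" for u
  proof (cases "u \<in> A")
    case True
    then have "p u \<in> Ny" using BN B_def by blast
    then show ?thesis using True fNy unfolding \<pi>0_def by (simp add: sum.delta')
  qed (simp add: \<pi>0_def)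
  have col0: "(\<Sum>u\<in>Nx. \<pi>0 u v) = (if v\<in>B then 1/D else 0)" for v
  proof (cases "v \<in> B")
    case True
    then obtain u0 where u0: "u0 \<in> A" "v = p u0" using B_def by blast
    have "\<And>u. (u \<in> A \<and> v = p u) = (u = u0)" using u0 pinj by (auto dest: inj_onD)
    then have "(\<Sum>u\<in>Nx. \<pi>0 u v) = (\<Sum>u\<in>Nx. if u = u0 then 1/D else 0)"
      unfolding \<pi>0_def by simp
    also have "\<dots> = 1/D" using u0 AN fNx by (simp add: sum.delta') blast
    finally show ?thesis using True by simp
  next
    case False
    then have "\<And>u. \<not> (u \<in> A \<and> v = p u)" using B_def by blast
    then show ?thesis using False unfolding \<pi>0_def by (intro trans[OF sum.neutral]) auto
  qed
  have coup: "\<pi> \<in> couplings E x y"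
    unfolding couplings_def
  proof (intro CollectI conjI allI impI ballI)
    fix u v
    show "0 \<le> \<pi> u v" unfolding \<pi>_def \<pi>0_def using r0 s0 S0 Dpos by simp
  next
    fix u v assume "\<pi> u v \<noteq> 0"
    then show "u \<in> nbrs E x" unfolding \<pi>_def Nx_def Ny_def
      by (auto split: if_splits)
  next
    fix u v assume "\<pi> u v \<noteq> 0"
    then show "v \<in> nbrs E y" unfolding \<pi>_def Nx_def Ny_def
      by (auto split: if_splits)
  next
    fix u assume u: "u \<in> nbrs E x"
    then have uN: "u \<in> Nx" using Nx_def by simp
    have "(\<Sum>v\<in>nbrs E y. \<pi> u v) = (\<Sum>v\<in>Ny. \<pi>0 u v + r u * s v / S)"
      unfolding \<pi>_def Ny_def using uN by simp
    also have "\<dots> = (\<Sum>v\<in>Ny. \<pi>0 u v) + r u * sum s Ny / S"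
      by (simp add: sum.distrib sum_divide_distrib[symmetric] sum_distrib_left)
    also have "\<dots> = 1 / real (deg E x)" using row0 ss rS[OF uN] unfolding r_def dx_def
      by simp
    finally show "(\<Sum>v\<in>nbrs E y. \<pi> u v) = 1 / real (deg E x)" .
  next
    fix v assume v: "v \<in> nbrs E y"
    then have vN: "v \<in> Ny" using Ny_def by simp
    have "(\<Sum>u\<in>nbrs E x. \<pi> u v) = (\<Sum>u\<in>Nx. \<pi>0 u v + r u * s v / S)"
      unfolding \<pi>_def Nx_def using vN by simp
    also have "\<dots> = (\<Sum>u\<in>Nx. \<pi>0 u v) + sum r Nx * s v / S"
      by (simp add: sum.distrib sum_divide_distrib[symmetric] sum_distrib_right)
    also have "\<dots> = 1 / real (deg E y)" using col0 sr sS[OF vN] unfolding s_def dy_def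
      by (simp add: mult.commute)
    finally show "(\<Sum>u\<in>nbrs E x. \<pi> u v) = 1 / real (deg E y)" .
  qed
  define cost where "cost = (\<Sum>(u,v)\<in>nbrs E x \<times> nbrs E y. \<pi> u v * gdist E u v)"
  have g0: "0 \<le> g u v" for u v unfolding g_def by (rule gdist_nonneg)
  have "cost = (\<Sum>u\<in>Nx. \<Sum>v\<in>Ny. \<pi>0 u v * g u v + r u * s v / S * g u v)"
    unfolding cost_def Nx_def[symmetric] Ny_def[symmetric] g_def[symmetric]
    by (simp add: sum.cartesian_product[symmetric] \<pi>_def distrib_right)
  also have "\<dots> = (\<Sum>u\<in>Nx. \<Sum>v\<in>Ny. \<pi>0 u v * g u v) + (\<Sum>u\<in>Nx. \<Sum>v\<in>Ny. r u * s v / S * g u v)"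
    by (simp add: sum.distrib)
  also have "(\<Sum>u\<in>Nx. \<Sum>v\<in>Ny. \<pi>0 u v * g u v) = (\<Sum>u\<in>A. g u (p u)) / D"
  proof -
    have "(\<Sum>v\<in>Ny. \<pi>0 u v * g u v) = (if u \<in> A then g u (p u) / D else 0)" if "u \<in> Nx" for u
    proof (cases "u \<in> A")
      case True
      then have "p u \<in> Ny" using BN B_def by blast
      have "(\<Sum>v\<in>Ny. \<pi>0 u v * g u v) = (\<Sum>v\<in>Ny. if v = p u then g u (p u) / D else 0)"
        by (rule sum.cong) (auto simp: \<pi>0_def True)
      then show ?thesis using True fNy \<open>p u \<in> Ny\<close> by (simp add: sum.delta')
    qed (simp add: \<pi>0_def)
    then have "(\<Sum>u\<in>Nx. \<Sum>v\<in>Ny. \<pi>0 u v * g u v) = (\<Sum>u\<in>Nx. if u \<in> A then g u (p u) / D else 0)"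
      by (rule sum.cong[OF refl])
    also have "\<dots> = (\<Sum>u\<in>Nx \<inter> A. g u (p u) / D)" by (rule sum.inter_restrict[OF fNx, symmetric])
    also have "Nx \<inter> A = A" using AN by blast
    finally show ?thesis by (simp add: sum_divide_distrib)
  qed
  also have "(\<Sum>u\<in>Nx. \<Sum>v\<in>Ny. r u * s v / S * g u v) \<le> (\<Sum>u\<in>Nx. \<Sum>v\<in>Ny. r u * s v / S * 3)"
  proof (intro sum_mono)
    fix u v assume "u \<in> Nx" "v \<in> Ny"
    then have "g u v \<le> 3" using g3 g_def Nx_def Ny_def by simp
    moreover have "r u * s v / S \<ge> 0" using r0 s0 S0 by simp
    ultimately show "r u * s v / S * g u v \<le> r u * s v / S * 3" by (rule mult_left_mono)
  qed
  also have "(\<Sum>u\<in>Nx. \<Sum>v\<in>Ny. r u * s v / S * 3) = 3 * (sum r Nx * sum s Ny / S)"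
  proof -
    have "(\<Sum>u\<in>Nx. \<Sum>v\<in>Ny. r u * s v / S * 3) = (\<Sum>u\<in>Nx. \<Sum>v\<in>Ny. r u * s v) * (3 / S)"
      by (simp add: sum_distrib_right sum_divide_distrib)
    also have "(\<Sum>u\<in>Nx. \<Sum>v\<in>Ny. r u * s v) = sum r Nx * sum s Ny" by (rule sum_product[symmetric])
    finally show ?thesis by simp
  qed
  also have "\<dots> = 3 * S" using sr ss by (cases "S = 0") (simp_all add: power2_eq_square)
  finally have costle: "cost \<le> (\<Sum>u\<in>A. g u (p u)) / D + 3 * S" by simp
  have "W1 E x y \<le> cost"
    unfolding W1_def cost_def
  proof (rule cInf_lower)
    show "(\<Sum>(u,v)\<in>nbrs E x \<times> nbrs E y. \<pi> u v * gdist E u v)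
      \<in> {(\<Sum>(u,v)\<in>nbrs E x \<times> nbrs E y. \<pi> u v * gdist E u v) |\<pi>. \<pi> \<in> couplings E x y}"
      using coup by blast
    show "bdd_below {(\<Sum>(u,v)\<in>nbrs E x \<times> nbrs E y. \<pi> u v * gdist E u v) |\<pi>. \<pi> \<in> couplings E x y}"
    proof (rule bdd_belowI[where m=0], clarify)
      fix \<sigma> assume "\<sigma> \<in> couplings E x y"
      then have "\<forall>u v. 0 \<le> \<sigma> u v" unfolding couplings_def by blast
      then show "0 \<le> (\<Sum>(u,v)\<in>nbrs E x \<times> nbrs E y. \<sigma> u v * gdist E u v)"
        by (intro sum_nonneg) (auto simp: gdist_nonneg)
    qed
  qed
  then show ?thesis using costle unfolding g_def D_def S_def by simp
qed
theorem lemma5p1: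
  fixes E :: "'a \<Rightarrow> 'a \<Rightarrow> bool" and x y :: 'a and k :: nat
    and a b :: "nat \<Rightarrow> 'a"
  assumes G: "graph E" and xy: "E x y"
    and kle: "k \<le> min (card (nbrs E x - {y} - (nbrs E x \<inter> nbrs E y)))
                       (card (nbrs E y - {x} - (nbrs E x \<inter> nbrs E y)))"
    and a_inj: "inj_on a {..<k}"
    and a_in: "a ` {..<k} \<subseteq> nbrs E x - {y} - (nbrs E x \<inter> nbrs E y)"
    and b_inj: "inj_on b {..<k}"
    and b_in: "b ` {..<k} \<subseteq> nbrs E y - {x} - (nbrs E x \<inter> nbrs E y)"
    and match: "\<forall>i<k. gdist E (a i) (b i) \<le> 2"
  shows "ollivier E x y \<ge> -2 + (3 * real (card (nbrs E x \<inter> nbrs E y)) + real k + 2)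
                                 / real (max (deg E x) (deg E y))
    \<and> (k = min (card (nbrs E x - {y} - (nbrs E x \<inter> nbrs E y)))
               (card (nbrs E y - {x} - (nbrs E x \<inter> nbrs E y))) \<longrightarrow>
       ollivier E x y \<ge> -2 + (2 * real (card (nbrs E x \<inter> nbrs E y))
                                 + real (min (deg E x) (deg E y)) + 1)
                                 / real (max (deg E x) (deg E y)))"
proof -
  define Nx where "Nx = nbrs E x"
  define Ny where "Ny = nbrs E y"
  define T where "T = Nx \<inter> Ny"
  define K where "K = {..<k}"
  define D where "D = real (max (deg E x) (deg E y))"
  have fNx: "finite Nx" using G unfolding Nx_def nbrs_def graph_def by auto
  have fNy: "finite Ny" using G unfolding Ny_def nbrs_def graph_def by auto
  have fT: "finite T" using fNx T_def by simp
  have yNx: "y \<in> Nx" using xy unfolding Nx_def nbrs_def by auto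
  have xNy: "x \<in> Ny" using xy G unfolding Ny_def nbrs_def graph_def by auto
  have yNy: "y \<notin> Ny" using G unfolding Ny_def nbrs_def graph_def by auto
  have xNx: "x \<notin> Nx" using G unfolding Nx_def nbrs_def graph_def by auto
  have aK: "a i \<in> Nx" "a i \<noteq> y" "a i \<notin> T" if "i \<in> K" for i
    using a_in that unfolding K_def Nx_def T_def Ny_def by auto
  have bK: "b i \<in> Ny" "b i \<noteq> x" "b i \<notin> T" if "i \<in> K" for i
    using b_in that unfolding K_def Nx_def T_def Ny_def by auto
  define A where "A = T \<union> {y} \<union> a ` K"
  define p where "p u = (if u \<in> T then u else if u = y then x else b (the_inv_into K a u))" for u
  have ainj: "inj_on a K" using a_inj K_def by simp
  have binj: "inj_on b K" using b_inj K_def by simp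
  have pa: "p (a i) = b i" if "i \<in> K" for i
    using aK[OF that] the_inv_into_f_f[OF ainj that] unfolding p_def by simp
  have yT: "y \<notin> T" using yNy T_def by simp
  have xT: "x \<notin> T" using xNx T_def by simp
  have AN: "A \<subseteq> nbrs E x" using aK yNx unfolding A_def T_def Nx_def by auto
  have pT: "p u = u" if "u \<in> T" for u using that p_def by simp
  have py: "p y = x" using yT p_def by simp
  have Acases: "u \<in> T \<or> u = y \<or> (\<exists>i\<in>K. u = a i)" if "u \<in> A" for u
    using that A_def by blast
  have pA: "p ` A \<subseteq> nbrs E y"
  proof
    fix v assume "v \<in> p ` A"
    then obtain u where u: "u \<in> A" "v = p u" by blast
    show "v \<in> nbrs E y"
      using Acases[OF u(1)]
    proof (elim disjE bexE)
      assume "u \<in> T" then show ?thesis using u pT T_def Ny_def by simp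
    next
      assume "u = y" then show ?thesis using u py xNy Ny_def by simp
    next
      fix i assume "i \<in> K" "u = a i" then show ?thesis using u pa bK Ny_def by simp
    qed
  qed
  have pinj: "inj_on p A"
  proof (rule inj_onI)
    fix u w assume u: "u \<in> A" and w: "w \<in> A" and e: "p u = p w"
    have pv: "(u \<in> T \<and> p u = u) \<or> (u = y \<and> p u = x) \<or> (\<exists>i\<in>K. u = a i \<and> p u = b i)"
      if "u \<in> A" for u using Acases[OF that] pT py pa by blast
    show "u = w"
      using pv[OF u] pv[OF w] e
    proof (elim disjE conjE bexE)
    qed (use yT xT bK binj in \<open>metis inj_onD\<close>)+
  qed
  have g3: "\<forall>u\<in>nbrs E x. \<forall>v\<in>nbrs E y. gdist E u v \<le> 3"
  proof (intro ballI)
    fix u v assume "u \<in> nbrs E x" "v \<in> nbrs E y"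
    then have "E u x" "E y v" using G unfolding nbrs_def graph_def by auto
    then show "gdist E u v \<le> 3" using gdist_3 xy by metis
  qed
  have disj1: "T \<inter> {y} = {}" using yT by blast
  have disj2: "(T \<union> {y}) \<inter> a ` K = {}" using aK by blast
  have fK: "finite K" unfolding K_def by simp
  have cA: "card A = card T + 1 + k"
    unfolding A_def using card_Un_disjoint[OF _ _ disj2] card_Un_disjoint[OF fT _ disj1]
      card_image[OF ainj] fT fK by (simp add: K_def)
  have sA: "(\<Sum>u\<in>A. gdist E u (p u)) \<le> 1 + 2 * real k"
  proof -
    have "(\<Sum>u\<in>A. gdist E u (p u)) = (\<Sum>u\<in>T \<union> {y}. gdist E u (p u))
           + (\<Sum>u\<in>a ` K. gdist E u (p u))"
      unfolding A_def by (rule sum.union_disjoint) (use fT fK disj2 in auto)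
    also have "(\<Sum>u\<in>T \<union> {y}. gdist E u (p u)) = (\<Sum>u\<in>T. gdist E u (p u)) + gdist E y (p y)"
      by (subst sum.union_disjoint) (use fT disj1 in auto)
    also have "(\<Sum>u\<in>T. gdist E u (p u)) = 0" by (simp add: p_def gdist_refl)
    also have "gdist E y (p y) \<le> 1" using yT G xy gdist_edge[of E y x]
      unfolding p_def graph_def by simp
    also have "(\<Sum>u\<in>a ` K. gdist E u (p u)) = (\<Sum>i\<in>K. gdist E (a i) (b i))"
      by (simp add: sum.reindex[OF ainj] pa)
    also have "\<dots> \<le> (\<Sum>i\<in>K. 2)" using match K_def by (intro sum_mono) auto
    finally show ?thesis by (simp add: K_def)
  qed
  have W: "W1 E x y \<le> (\<Sum>u\<in>A. gdist E u (p u)) / D + 3 * (1 - real (card A) / D)"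
    using W1_le[OF G xy AN pA pinj g3] unfolding D_def .
  have Dpos: "D > 0"
  proof -
    have "card Nx > 0" using fNx yNx by (auto simp: card_gt_0_iff)
    then show ?thesis unfolding D_def deg_def Nx_def by simp
  qed
  have main: "ollivier E x y \<ge> -2 + (3 * real (card T) + real k + 2) / D"
  proof -
    have "W1 E x y \<le> (1 + 2 * real k) / D + 3 * (1 - real (card T + 1 + k) / D)"
    proof -
      have "(\<Sum>u\<in>A. gdist E u (p u)) / D \<le> (1 + 2 * real k) / D"
        using sA Dpos by (simp add: divide_right_mono)
      then show ?thesis using W cA by simp
    qed
    moreover have "(1 + 2 * real k) / D + 3 * (1 - real (card T + 1 + k) / D)
        = 3 - (3 * real (card T) + real k + 2) / D"
      using Dpos by (simp add: field_simps)
    ultimately show ?thesis unfolding ollivier_def by linarith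
  qed
  have cRx: "card (Nx - {y} - T) + card T + 1 = card Nx"
  proof -
    have "Nx - {y} - T = Nx - insert y T" by blast
    moreover have "card (Nx - insert y T) = card Nx - card (insert y T)"
      using fNx yNx T_def by (intro card_Diff_subset) auto
    moreover have "card (insert y T) = card T + 1" using fT yT by simp
    moreover have "card (insert y T) \<le> card Nx" using fNx yNx T_def by (intro card_mono) auto
    ultimately show ?thesis by simp
  qed
  have cRy: "card (Ny - {x} - T) + card T + 1 = card Ny"
  proof -
    have "Ny - {x} - T = Ny - insert x T" by blast
    moreover have "card (Ny - insert x T) = card Ny - card (insert x T)"
      using fNy xNy T_def by (intro card_Diff_subset) auto
    moreover have "card (insert x T) = card T + 1" using fT xT by simp
    moreover have "card (insert x T) \<le> card Ny" using fNy xNy T_def by (intro card_mono) auto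
    ultimately show ?thesis by simp
  qed
  have second: "k = min (card (Nx - {y} - T)) (card (Ny - {x} - T)) \<Longrightarrow>
     ollivier E x y \<ge> -2 + (2 * real (card T) + real (min (deg E x) (deg E y)) + 1) / D"
  proof -
    assume hk: "k = min (card (Nx - {y} - T)) (card (Ny - {x} - T))"
    have "min (deg E x) (deg E y) = card T + 1 + k"
      using hk cRx cRy unfolding deg_def Nx_def[symmetric] Ny_def[symmetric] by linarith
    then have "2 * real (card T) + real (min (deg E x) (deg E y)) + 1 = 3 * real (card T) + real k + 2"
      by simp
    then show ?thesis using main by (simp add: add_ac)
  qed
  show ?thesis using main second unfolding T_def Nx_def Ny_def D_def by blast
qed
end
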